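(* Fix real numbers $\alpha>0$ and $c>-1$ such that $\frac{\alpha}{1+c}\le\frac12$. If $v_1,\ldots,v_n$ are positive integers satisfying $\frac{v_i}{v_{i-1}}\ge i+c-1$ for all $2\le i\le n$, then $\mathrm{ML}(v_1,\ldots,v_n)\ge\frac{\alpha}{n+c}$.
   Context: For a real number $x$, $\Vert x\Vert$ denotes the distance from $x$ to the nearest integer. For positive integers $v_1,\ldots,v_n$, the maximum loneliness is $\mathrm{ML}(v_1,\ldots,v_n)=\max_{t\in\mathbb{R}}\min_{1\le i\le n}\Vert t v_i\Vert$. *)

theory Defs
  imports "HOL-Analysis.Analysis"
begin

definition dist_int :: "real \<Rightarrow> real" where
  "dist_int x = \<bar>x - of_int (round x)\<bar>"

text \<open>Maximum loneliness of speeds v 1, ..., v n (n >= 1):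
  sup over real t of min over 1 <= i <= n of dist_int (t * v i).
  The supremum is attained (continuous periodic function), so this is the max.\<close>
definition max_loneliness :: "nat \<Rightarrow> (nat \<Rightarrow> nat) \<Rightarrow> real" where
  "max_loneliness n v = (SUP t::real. Min ((\<lambda>i. dist_int (t * real (v i))) ` {1..n}))"

end

theory Submission
  imports Defs
begin

lemma dist_int_le: "dist_int y \<le> \<bar>y - of_int k\<bar>"
proof (rule ccontr)
  assume "\<not> ?thesis"
  hence h: "\<bar>y - of_int k\<bar> < \<bar>y - of_int (round y)\<bar>" by (simp add: dist_int_def)
  have "\<bar>of_int (round y) - y\<bar> \<le> 1/2" by (rule of_int_round_abs_le)
  hence "\<bar>of_int k - of_int (round y)\<bar> < (1::real)" using h by linarith
  hence "\<bar>k - round y\<bar> < 1" by linarith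
  hence "k = round y" by linarith
  thus False using h by simp
qed

lemma dist_int_half: "dist_int y \<le> 1/2"
  using of_int_round_abs_le[of y] by (simp add: dist_int_def abs_minus_commute)

lemma dist_int_nonneg: "0 \<le> dist_int y"
  by (simp add: dist_int_def)

lemma dist_int_ge: "(\<And>k::int. x \<le> \<bar>y - of_int k\<bar>) \<Longrightarrow> x \<le> dist_int y"
  by (simp add: dist_int_def)

lemma dist_int_lip: "dist_int b - \<bar>a - b\<bar> \<le> dist_int a"
proof -
  have "dist_int b \<le> \<bar>b - of_int (round a)\<bar>" by (rule dist_int_le)
  thus ?thesis by (simp add: dist_int_def)
qed

lemma window:
  assumes v: "(v::real) > 0" and x: "0 \<le> x" "x \<le> 1/2"
  shows "\<exists>t. \<bar>t - t0\<bar> \<le> x / v \<and> x \<le> dist_int (t * v)"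
proof (cases "x \<le> dist_int (t0 * v)")
  case True thus ?thesis using x v by (intro exI[of _ t0]) simp
next
  case False
  define u where "u = t0 * v"
  define r where "r = round u"
  have hu: "\<bar>u - of_int r\<bar> < x" using False by (simp add: dist_int_def u_def r_def)
  obtain s where s: "\<bar>s - u\<bar> \<le> x" "x \<le> dist_int s"
  proof (cases "u \<ge> of_int r")
    case True
    have "x \<le> dist_int (of_int r + x)"
    proof (rule dist_int_ge)
      fix k :: int
      show "x \<le> \<bar>of_int r + x - of_int k\<bar>"
      proof (cases "k \<le> r")
        case True thus ?thesis using x by (simp add: abs_if)
      next
        case False hence "of_int k \<ge> of_int r + (1::real)" by linarith
        thus ?thesis using x by (simp add: abs_if)
      qed
    qed
    moreover have "\<bar>of_int r + x - u\<bar> \<le> x" using True hu by (simp add: abs_if)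
    ultimately show ?thesis using that by blast
  next
    case False
    have "x \<le> dist_int (of_int r - x)"
    proof (rule dist_int_ge)
      fix k :: int
      show "x \<le> \<bar>of_int r - x - of_int k\<bar>"
      proof (cases "k \<ge> r")
        case True thus ?thesis using x by (simp add: abs_if)
      next
        case False hence "of_int k \<le> of_int r - (1::real)" by linarith
        thus ?thesis using x by (simp add: abs_if)
      qed
    qed
    moreover have "\<bar>of_int r - x - u\<bar> \<le> x" using False hu by (simp add: abs_if)
    ultimately show ?thesis using that by blast
  qed
  have "s / v - t0 = (s - u) / v" using v by (simp add: u_def field_simps)
  hence "\<bar>s / v - t0\<bar> = \<bar>s - u\<bar> / v" using v by simp
  also have "\<dots> \<le> x / v" using s(1) v by (simp add: divide_right_mono)
  finally show ?thesis using s(2) v by (intro exI[of _ "s / v"]) simp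
qed

lemma chain:
  fixes \<alpha> c :: real and n :: nat and v :: "nat \<Rightarrow> nat"
  assumes a: "\<alpha> > 0" and c: "c > -1" and ac: "\<alpha> / (1 + c) \<le> 1/2"
    and pos: "\<forall>i\<in>{1..n}. v i > 0"
    and rat: "\<forall>i\<in>{2..n}. real (v i) \<ge> (real i + c - 1) * real (v (i - 1))"
    and mono: "\<forall>i j. 1 \<le> i \<longrightarrow> i \<le> j \<longrightarrow> j \<le> n \<longrightarrow> v i \<le> v j"
    and k: "1 \<le> k"
  shows "k \<le> n \<Longrightarrow> \<exists>t. \<forall>i\<in>{1..k}. \<alpha> / (real k + c) \<le> dist_int (t * real (v i))"
  using k
proof (induction k rule: nat_induct_at_least)
  case base
  have "v 1 > 0" using pos base by auto
  have r: "round (1/2::real) = 1" by (simp add: round_def)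
  have h: "dist_int (1/2) = 1/2" by (simp add: dist_int_def r)
  have e: "1 / (2 * real (v 1)) * real (v 1) = 1/2" using \<open>v 1 > 0\<close> by simp
  have "\<alpha> / (real 1 + c) \<le> dist_int (1 / (2 * real (v 1)) * real (v 1))"
    unfolding e h using ac by (simp add: add.commute)
  hence "\<forall>i\<in>{1..1}. \<alpha> / (real 1 + c) \<le> dist_int (1 / (2 * real (v 1)) * real (v i))"
    by (metis atLeastAtMost_singleton singletonD)
  thus ?case by blast
next
  case (Suc k)
  then obtain t0 where t0: "\<forall>i\<in>{1..k}. \<alpha> / (real k + c) \<le> dist_int (t0 * real (v i))" by auto
  define V where "V = real (v (Suc k))"
  define \<delta> where "\<delta> = \<alpha> / (real (Suc k) + c)"
  have kc: "real k + c > 0" using Suc c by linarith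
  have Vpos: "V > 0" using pos Suc by (auto simp: V_def)
  have d0: "0 \<le> \<delta>" using a kc by (simp add: \<delta>_def)
  have "\<delta> \<le> \<alpha> / (1 + c)" unfolding \<delta>_def
    using a c Suc by (intro divide_left_mono) (auto simp: mult_pos_pos)
  hence d1: "\<delta> \<le> 1/2" using ac by linarith
  obtain t where t: "\<bar>t - t0\<bar> \<le> \<delta> / V" "\<delta> \<le> dist_int (t * V)"
    using window[OF Vpos d0 d1] by blast
  have VR: "V \<ge> (real k + c) * real (v k)"
  proof -
    have "Suc k \<in> {2..n}" using Suc by auto
    hence "(real (Suc k) + c - 1) * real (v (Suc k - 1)) \<le> V" using rat unfolding V_def by blast
    thus ?thesis by simp
  qed
  have "\<forall>i\<in>{1..Suc k}. \<delta> \<le> dist_int (t * real (v i))"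
  proof
    fix i assume i: "i \<in> {1..Suc k}"
    show "\<delta> \<le> dist_int (t * real (v i))"
    proof (cases "i = Suc k")
      case True thus ?thesis using t by (simp add: V_def)
    next
      case False
      hence ik: "i \<in> {1..k}" using i by auto
      have vi: "real (v i) \<le> real (v k)" using mono ik Suc by auto
      have vi0: "real (v i) \<ge> 0" by simp
      have "\<bar>t * real (v i) - t0 * real (v i)\<bar> = \<bar>t - t0\<bar> * real (v i)"
        by (simp add: left_diff_distrib[symmetric] abs_mult)
      also have "\<dots> \<le> \<delta> / V * real (v i)" using t(1) vi0 by (rule mult_right_mono)
      also have "\<dots> \<le> \<delta> / (real k + c)"
      proof -
        have "(real k + c) * real (v i) \<le> V" using VR vi kc
          by (meson dual_order.trans less_imp_le mult_left_mono)
        hence "\<delta> * ((real k + c) * real (v i)) \<le> \<delta> * V" using d0 by (rule mult_left_mono)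
        thus ?thesis using Vpos kc by (simp add: field_simps)
      qed
      finally have h1: "\<bar>t * real (v i) - t0 * real (v i)\<bar> \<le> \<delta> / (real k + c)" .
      have h2: "\<alpha> / (real k + c) - \<delta> / (real k + c) = \<delta>"
      proof -
        have k1: "real (Suc k) + c > 0" using kc by simp
        have "\<alpha> - \<delta> = \<delta> * (real k + c)" unfolding \<delta>_def using k1
          by (simp add: field_simps)
        thus ?thesis using kc by (simp add: diff_divide_distrib[symmetric])
      qed
      have "\<alpha> / (real k + c) \<le> dist_int (t0 * real (v i))" using t0 ik by auto
      thus ?thesis using dist_int_lip[of "t0 * real (v i)" "t * real (v i)"] h1 h2
        by (simp add: abs_minus_commute)
    qed
  qed
  thus ?case unfolding \<delta>_def by blast
qed

definition CC :: "real \<Rightarrow> nat \<Rightarrow> real set" where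
  "CC \<delta> v = {0..\<delta>/real v} \<union> {1-\<delta>/real v..1} \<union>
     (\<Union>m\<in>{1..<v}. {(real m-\<delta>)/real v..(real m+\<delta>)/real v})"

lemma cover:
  assumes v: "v > 0" and d: "0 < \<delta>" "\<delta> \<le> 1/2" and t: "t \<in> {0..1}"
    and lt: "dist_int (t * real v) < \<delta>"
  shows "t \<in> CC \<delta> v"
proof -
  define r where "r = round (t * real v)"
  have hr: "\<bar>t * real v - of_int r\<bar> < \<delta>" using lt by (simp add: dist_int_def r_def)
  have vp: "real v > 0" using v by simp
  have tv0: "0 \<le> t * real v" using t by simp
  have tv1: "t * real v \<le> real v" using t vp by (simp add: mult_le_cancel_right1)
  have r0: "r \<ge> 0" using hr tv0 d by linarith
  have r1: "r \<le> int v" using hr tv1 d by linarith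
  consider "r = 0" | "r = int v" | "1 \<le> r \<and> r < int v" using r0 r1 by linarith
  thus ?thesis
  proof cases
    case 1
    hence "t * real v \<le> \<delta>" using hr by simp
    hence "t \<le> \<delta> / real v" using vp by (simp add: field_simps)
    thus ?thesis using t by (simp add: CC_def)
  next
    case 2
    hence "real v - \<delta> \<le> t * real v" using hr by simp
    hence "1 - \<delta> / real v \<le> t" using vp by (simp add: field_simps)
    thus ?thesis using t by (simp add: CC_def)
  next
    case 3
    define m where "m = nat r"
    have m: "m \<in> {1..<v}" using 3 by (auto simp: m_def)
    have rm: "of_int r = real m" using 3 by (simp add: m_def)
    have "real m - \<delta> \<le> t * real v" "t * real v \<le> real m + \<delta>" using hr rm by auto
    hence "(real m - \<delta>) / real v \<le> t" "t \<le> (real m + \<delta>) / real v"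
      using vp by (simp_all add: field_simps)
    hence "t \<in> {(real m - \<delta>) / real v..(real m + \<delta>) / real v}" by simp
    hence "t \<in> (\<Union>m\<in>{1..<v}. {(real m-\<delta>)/real v..(real m+\<delta>)/real v})"
      by (rule UN_I[OF m])
    thus ?thesis unfolding CC_def by (rule UnI2)
  qed
qed

lemma CC_sets: "CC \<delta> v \<in> sets lborel"
  unfolding CC_def by (intro sets.Un sets.finite_UN) auto

lemma measure_CC:
  assumes v: "v > 0" and d: "0 \<le> \<delta>"
  shows "emeasure lborel (CC \<delta> v) \<le> ennreal (2 * \<delta>)"
proof -
  have vp: "real v > 0" using v by simp
  have q: "0 \<le> \<delta> / real v" using d vp by simp
  let ?A = "{0..\<delta>/real v}" and ?B = "{1-\<delta>/real v..1::real}"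
    and ?U = "\<Union>m\<in>{1..<v}. {(real m-\<delta>)/real v..(real m+\<delta>)/real v}"
  have e1: "emeasure lborel (CC \<delta> v) \<le> emeasure lborel (?A \<union> ?B) + emeasure lborel ?U"
    unfolding CC_def by (rule emeasure_subadditive) (intro sets.Un sets.finite_UN; auto)+
  have e2: "emeasure lborel (?A \<union> ?B) \<le> emeasure lborel ?A + emeasure lborel ?B"
    by (intro emeasure_subadditive) simp_all
  have e3: "emeasure lborel ?A = ennreal (\<delta> / real v)" using q by simp
  have e4: "emeasure lborel ?B = ennreal (\<delta> / real v)" using q by simp
  have e5: "emeasure lborel ?U \<le> (\<Sum>m\<in>{1..<v}. emeasure lborel {(real m-\<delta>)/real v..(real m+\<delta>)/real v})"
    by (rule emeasure_subadditive_finite) (simp_all add: image_subset_iff)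
  have e6: "(\<Sum>m\<in>{1..<v}. emeasure lborel {(real m-\<delta>)/real v..(real m+\<delta>)/real v})
      = (\<Sum>m\<in>{1..<v}. ennreal (2 * \<delta> / real v))"
  proof (rule sum.cong)
    fix m assume "m \<in> {1..<v}"
    have le: "(real m-\<delta>)/real v \<le> (real m+\<delta>)/real v" using d vp by (simp add: divide_right_mono)
    have "(real m+\<delta>)/real v - (real m-\<delta>)/real v = 2 * \<delta> / real v" using vp by (simp add: field_simps)
    thus "emeasure lborel {(real m-\<delta>)/real v..(real m+\<delta>)/real v} = ennreal (2 * \<delta> / real v)"
      using le by simp
  qed simp
  have e7: "(\<Sum>m\<in>{1..<v}. ennreal (2 * \<delta> / real v)) = ennreal (real (v - 1) * (2 * \<delta> / real v))"
  proof -
    have "(\<Sum>m\<in>{1..<v}. ennreal (2 * \<delta> / real v)) = of_nat (v - 1) * ennreal (2 * \<delta> / real v)"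
      by simp
    also have "\<dots> = ennreal (real (v - 1)) * ennreal (2 * \<delta> / real v)"
      by (simp only: ennreal_of_nat_eq_real_of_nat)
    also have "\<dots> = ennreal (real (v - 1) * (2 * \<delta> / real v))"
      by (rule ennreal_mult[symmetric]) (use d vp in simp_all)
    finally show ?thesis .
  qed
  have e8: "ennreal (\<delta> / real v) + ennreal (\<delta> / real v) + ennreal (real (v - 1) * (2 * \<delta> / real v))
     = ennreal (\<delta> / real v + \<delta> / real v + real (v - 1) * (2 * \<delta> / real v))"
  proof -
    have z: "0 \<le> real (v - 1) * (2 * \<delta> / real v)" using d vp by simp
    have "ennreal (\<delta> / real v) + ennreal (\<delta> / real v) = ennreal (\<delta> / real v + \<delta> / real v)"
      by (rule ennreal_plus[symmetric]) (use q in simp_all)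
    moreover have "ennreal (\<delta> / real v + \<delta> / real v) + ennreal (real (v - 1) * (2 * \<delta> / real v))
      = ennreal (\<delta> / real v + \<delta> / real v + real (v - 1) * (2 * \<delta> / real v))"
      by (rule ennreal_plus[symmetric]) (use q z in simp_all)
    ultimately show ?thesis by simp
  qed
  have e9: "\<delta> / real v + \<delta> / real v + real (v - 1) * (2 * \<delta> / real v) = 2 * \<delta>"
    using v vp by (simp add: of_nat_diff field_simps)
  have "emeasure lborel (CC \<delta> v) \<le> ennreal (\<delta> / real v) + ennreal (\<delta> / real v) + ennreal (real (v - 1) * (2 * \<delta> / real v))"
    using e1 e2 e5 unfolding e3 e4 e6 e7 by (meson add_right_mono order_trans add_mono)
  thus ?thesis unfolding e8 e9 .
qed

lemma trivial_bound:
  assumes pos: "\<forall>i\<in>{1..n}. v i > 0" and d: "0 < \<delta>" and small: "2 * real n * \<delta> < 1"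
  shows "\<exists>t. \<forall>i\<in>{1..n}. \<delta> \<le> dist_int (t * real (v i))"
proof (rule ccontr)
  assume "\<not> ?thesis"
  hence bad: "\<forall>t. \<exists>i\<in>{1..n}. dist_int (t * real (v i)) < \<delta>" by (auto simp: not_le)
  have n: "n \<ge> 1"
  proof (rule ccontr)
    assume "\<not> n \<ge> 1"
    hence "n = 0" by simp
    thus False using bad by auto
  qed
  have d2: "\<delta> \<le> 1/2"
  proof -
    have "2 * 1 * \<delta> \<le> 2 * real n * \<delta>" using n d by (intro mult_right_mono) auto
    thus ?thesis using small by linarith
  qed
  have sub: "{0..1} \<subseteq> (\<Union>i\<in>{1..n}. CC \<delta> (v i))"
  proof
    fix t :: real assume t: "t \<in> {0..1}"
    then obtain i where i: "i \<in> {1..n}" "dist_int (t * real (v i)) < \<delta>" using bad by blast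
    hence "t \<in> CC \<delta> (v i)" using cover[of "v i" \<delta> t] pos d d2 t by auto
    thus "t \<in> (\<Union>i\<in>{1..n}. CC \<delta> (v i))" using i by blast
  qed
  have "ennreal 1 = emeasure lborel {0..1::real}" by simp
  also have "\<dots> \<le> emeasure lborel (\<Union>i\<in>{1..n}. CC \<delta> (v i))"
  proof (rule emeasure_mono[OF sub])
    show "(\<Union>i\<in>{1..n}. CC \<delta> (v i)) \<in> sets lborel"
      by (intro sets.finite_UN ballI CC_sets) simp
  qed
  also have "\<dots> \<le> (\<Sum>i\<in>{1..n}. emeasure lborel (CC \<delta> (v i)))"
    by (rule emeasure_subadditive_finite) (simp, use CC_sets in blast)
  also have "\<dots> \<le> (\<Sum>i\<in>{1..n}. ennreal (2 * \<delta>))"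
    using pos d by (intro sum_mono measure_CC) auto
  also have "\<dots> = of_nat n * ennreal (2 * \<delta>)" by simp
  also have "\<dots> = ennreal (real n) * ennreal (2 * \<delta>)" by (simp only: ennreal_of_nat_eq_real_of_nat)
  also have "\<dots> = ennreal (real n * (2 * \<delta>))" by (rule ennreal_mult[symmetric]) (use d in simp_all)
  finally have "1 \<le> real n * (2 * \<delta>)" using d by (simp add: ennreal_le_iff)
  thus False using small by (simp add: mult_ac)
qed

theorem proposition8p2:
  fixes \<alpha> c :: real and n :: nat and v :: "nat \<Rightarrow> nat"
  assumes "\<alpha> > 0" and "c > -1" and "\<alpha> / (1 + c) \<le> 1/2"
    and "n \<ge> 1"
    and "\<forall>i\<in>{1..n}. v i > 0"
    and "\<forall>i\<in>{2..n}. real (v i) / real (v (i - 1)) \<ge> real i + c - 1"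
  shows "max_loneliness n v \<ge> \<alpha> / (real n + c)"
proof -
  note a = assms(1) and c = assms(2) and ac = assms(3) and n = assms(4) and pos = assms(5)
  define \<delta> where "\<delta> = \<alpha> / (real n + c)"
  have nc: "real n + c > 0" using n c by linarith
  have rat: "\<forall>i\<in>{2..n}. real (v i) \<ge> (real i + c - 1) * real (v (i - 1))"
  proof
    fix i assume i: "i \<in> {2..n}"
    hence "i - 1 \<in> {1..n}" by auto
    hence "v (i - 1) > 0" using pos by blast
    moreover have "real (v i) / real (v (i - 1)) \<ge> real i + c - 1" using bspec[OF assms(6) i] .
    ultimately show "real (v i) \<ge> (real i + c - 1) * real (v (i - 1))"
      by (simp add: pos_le_divide_eq)
  qed
  have "\<exists>t. \<forall>i\<in>{1..n}. \<delta> \<le> dist_int (t * real (v i))"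
  proof (cases "c \<ge> 0 \<or> n = 1")
    case True
    have mono: "\<forall>i j. 1 \<le> i \<longrightarrow> i \<le> j \<longrightarrow> j \<le> n \<longrightarrow> v i \<le> v j"
    proof (cases "n = 1")
      case True
      show ?thesis
      proof (intro allI impI)
        fix i j assume "1 \<le> i" "i \<le> j" "j \<le> n"
        hence "i = j" using True by linarith
        thus "v i \<le> v j" by simp
      qed
    next
      case False
      hence c0: "c \<ge> 0" using \<open>c \<ge> 0 \<or> n = 1\<close> by simp
      have "1 \<le> i \<Longrightarrow> i \<le> j \<Longrightarrow> j \<le> n \<Longrightarrow> v i \<le> v j" for i j
      proof (induction j)
        case 0 thus ?case by simp
      next
        case (Suc j)
        show ?case
        proof (cases "i = Suc j")
          case True thus ?thesis by simp
        next
          case False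
          hence ij: "i \<le> j" using Suc by simp
          hence "v i \<le> v j" using Suc by simp
          moreover have "Suc j \<in> {2..n}" using Suc ij by auto
          hence "(real (Suc j) + c - 1) * real (v (Suc j - 1)) \<le> real (v (Suc j))" using rat by blast
          hence "(real j + c) * real (v j) \<le> real (v (Suc j))" by simp
          moreover have "real (v j) \<le> (real j + c) * real (v j)"
          proof -
            have "1 \<le> real j + c" using ij Suc c0 by linarith
            thus ?thesis by (simp add: mult_le_cancel_right1)
          qed
          ultimately show ?thesis by linarith
        qed
      qed
      thus ?thesis by blast
    qed
    show ?thesis using chain[OF a c ac pos rat mono n] unfolding \<delta>_def by blast
  next
    case False
    hence c0: "c < 0" and n2: "n \<ge> 2" using n by auto
    have "2 * real n * \<alpha> \<le> real n * (1 + c)"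
    proof -
      have "\<alpha> \<le> (1 + c) / 2" using ac c by (simp add: divide_le_eq field_simps)
      hence "\<alpha> * 2 \<le> 1 + c" by simp
      hence "\<alpha> * 2 * real n \<le> (1 + c) * real n" by (rule mult_right_mono) simp
      thus ?thesis by (simp add: algebra_simps)
    qed
    moreover have "real n * c < c" using c0 n2 by (simp add: mult_less_cancel_right1 mult.commute)
    ultimately have "2 * real n * \<alpha> < real n + c" by (simp add: algebra_simps)
    hence "2 * real n * \<delta> < 1" using nc by (simp add: \<delta>_def field_simps)
    moreover have "0 < \<delta>" using a nc by (simp add: \<delta>_def)
    ultimately show ?thesis using trivial_bound[OF pos] by blast
  qed
  then obtain t where t: "\<forall>i\<in>{1..n}. \<delta> \<le> dist_int (t * real (v i))" by blast
  let ?f = "\<lambda>t. Min ((\<lambda>i. dist_int (t * real (v i))) ` {1..n})"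
  have ne: "{1..n} \<noteq> {}" using n by simp
  have bdd: "bdd_above (range ?f)"
  proof (rule bdd_aboveI)
    fix y assume "y \<in> range ?f"
    then obtain s where y: "y = ?f s" by blast
    have "?f s \<le> dist_int (s * real (v 1))" using n by (intro Min_le) auto
    thus "y \<le> 1/2" using y dist_int_half[of "s * real (v 1)"] by linarith
  qed
  have "\<delta> \<le> ?f t" using t ne by (subst Min_ge_iff) auto
  hence "\<delta> \<le> (SUP t. ?f t)" using bdd by (intro cSUP_upper2[of ?f UNIV t]) auto
  thus ?thesis unfolding max_loneliness_def \<delta>_def .
qed

end
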